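(* Fix a right-censored data set $\{(y_i,\delta_i)\}_{i=1}^n$ with no ties. For every failure time $t$ (i.e. $t=y_i$ for some $i$ with $\delta_i=1$), $E^*[S^L(t)]\le\tilde S(t)\le E^*[S^U(t)]$, where $E^*$ is expectation under the fiducial probability and $\tilde S(t)=\prod_{u\le t}\{1-\Delta\bar N(u)/\bar K(u)\}$ is the Kaplan–Meier estimator.
   Context: $\bar N(s)=\sum_i I\{y_i\le s\}\delta_i$, $\bar K(s)=\sum_i I\{y_i\ge s\}$, $\Delta\bar N(s)=\bar N(s)-\bar N(s-)$. For $u\in(0,1)^n$ let $Q^F(u)$ be the set of distribution functions $F$ on $[0,\infty)$ with $F(y_i)\ge u_i$ and $F(y_i-\varepsilon)<u_i$ for all $\varepsilon>0$ whenever $\delta_i=1$, and $F(y_j)<u_j$ whenever $\delta_j=0$. Under the fiducial probability, $U^*$ is i.i.d. $U(0,1)^n$ conditioned on $Q^F(U^* )\neq\emptyset$; $S^U(s)=1-\inf\{F(s):F\in Q^F(U^* )\}$ and $S^L(s)=1-\sup\{F(s):F\in Q^F(U^* )\}$. *)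

theory Defs
  imports "HOL-Probability.Probability"
begin

text \<open>Data: n observations y i (i < n) with censoring indicators delta i
  (True = failure observed, i.e. delta_i = 1).\<close>

definition Nbar :: "nat \<Rightarrow> (nat \<Rightarrow> real) \<Rightarrow> (nat \<Rightarrow> bool) \<Rightarrow> real \<Rightarrow> real" where
  "Nbar n y \<delta> s = (\<Sum>i<n. if y i \<le> s \<and> \<delta> i then 1 else 0)"

definition Nbar_left :: "nat \<Rightarrow> (nat \<Rightarrow> real) \<Rightarrow> (nat \<Rightarrow> bool) \<Rightarrow> real \<Rightarrow> real" where
  "Nbar_left n y \<delta> s = (\<Sum>i<n. if y i < s \<and> \<delta> i then 1 else 0)"

definition Kbar :: "nat \<Rightarrow> (nat \<Rightarrow> real) \<Rightarrow> real \<Rightarrow> real" where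
  "Kbar n y s = (\<Sum>i<n. if y i \<ge> s then 1 else 0)"

definition dNbar :: "nat \<Rightarrow> (nat \<Rightarrow> real) \<Rightarrow> (nat \<Rightarrow> bool) \<Rightarrow> real \<Rightarrow> real" where
  "dNbar n y \<delta> s = Nbar n y \<delta> s - Nbar_left n y \<delta> s"

text \<open>Kaplan--Meier estimator: product over u \<le> t of (1 - dN(u)/K(u)); factors
  are 1 unless u is an observation time, so the product ranges over the
  (finitely many) observation times u \<le> t.\<close>
definition KM :: "nat \<Rightarrow> (nat \<Rightarrow> real) \<Rightarrow> (nat \<Rightarrow> bool) \<Rightarrow> real \<Rightarrow> real" where
  "KM n y \<delta> t = (\<Prod>u\<in>{u \<in> y ` {..<n}. u \<le> t}. 1 - dNbar n y \<delta> u / Kbar n y u)"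

definition is_dist_fun_nonneg :: "(real \<Rightarrow> real) \<Rightarrow> bool" where
  "is_dist_fun_nonneg F \<longleftrightarrow> mono F \<and> (\<forall>x. continuous (at_right x) F)
     \<and> (F \<longlongrightarrow> 1) at_top \<and> (\<forall>x<0. F x = 0)"

definition QF :: "nat \<Rightarrow> (nat \<Rightarrow> real) \<Rightarrow> (nat \<Rightarrow> bool) \<Rightarrow> (nat \<Rightarrow> real) \<Rightarrow> (real \<Rightarrow> real) set" where
  "QF n y \<delta> u = {F. is_dist_fun_nonneg F \<and>
     (\<forall>i<n. \<delta> i \<longrightarrow> F (y i) \<ge> u i \<and> (\<forall>\<epsilon>>0. F (y i - \<epsilon>) < u i)) \<and>
     (\<forall>j<n. \<not> \<delta> j \<longrightarrow> F (y j) < u j)}"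

definition S_upper :: "nat \<Rightarrow> (nat \<Rightarrow> real) \<Rightarrow> (nat \<Rightarrow> bool) \<Rightarrow> (nat \<Rightarrow> real) \<Rightarrow> real \<Rightarrow> real" where
  "S_upper n y \<delta> u s = 1 - Inf ((\<lambda>F. F s) ` QF n y \<delta> u)"

definition S_lower :: "nat \<Rightarrow> (nat \<Rightarrow> real) \<Rightarrow> (nat \<Rightarrow> bool) \<Rightarrow> (nat \<Rightarrow> real) \<Rightarrow> real \<Rightarrow> real" where
  "S_lower n y \<delta> u s = 1 - Sup ((\<lambda>F. F s) ` QF n y \<delta> u)"

definition unif_cube :: "nat \<Rightarrow> (nat \<Rightarrow> real) measure" where
  "unif_cube n = PiM {..<n} (\<lambda>_. uniform_measure lborel {0<..<1})"

definition fiducial :: "nat \<Rightarrow> (nat \<Rightarrow> real) \<Rightarrow> (nat \<Rightarrow> bool) \<Rightarrow> (nat \<Rightarrow> real) measure" where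
  "fiducial n y \<delta> = uniform_measure (unif_cube n)
      {u \<in> space (unif_cube n). QF n y \<delta> u \<noteq> {}}"

end

theory Submission
  imports Defs
begin

abbreviation U01 :: "real measure" where "U01 \<equiv> uniform_measure lborel {0<..<1::real}"

lemma U01_prob: "prob_space U01"
  by (intro prob_space_uniform_measure) auto

lemma U01_sf: "sigma_finite_measure U01"
proof -
  interpret prob_space U01 by (rule U01_prob)
  show ?thesis by unfold_locales
qed

interpretation U01P: product_sigma_finite "\<lambda>_::nat. U01"
  unfolding product_sigma_finite_def using U01_sf by auto

lemma AE_U01: "AE z in U01. 0 < z \<and> z < 1"
  by (rule AE_uniform_measureI) auto

lemma nn_U01: assumes [measurable]: "h \<in> borel_measurable borel"
  shows "(\<integral>\<^sup>+z. h z \<partial>U01) = (\<integral>\<^sup>+z. h z * indicator {0<..<1} z \<partial>lborel)"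
  by (subst nn_integral_uniform_measure) (auto simp: divide_ennreal_def)

lemma U01_interval:
  assumes "0 \<le> a" "a \<le> b" "b \<le> 1"
  shows "(\<integral>\<^sup>+z. indicator {a<..<b} z \<partial>U01) = ennreal (b - a)"
  using assms by (subst nn_integral_indicator) (auto simp: Int_absorb1 divide_ennreal_def)

lemma U01_pow:
  fixes c L :: real and k :: nat
  assumes "0 \<le> L" "L \<le> 1" "0 \<le> c"
  shows "(\<integral>\<^sup>+z. indicator {L<..} z * ennreal (c * (1 - z) ^ k) \<partial>U01)
         = ennreal (c * (1 - L) ^ Suc k / Suc k)"
proof -
  have "(\<integral>\<^sup>+z. indicator {L<..} z * ennreal (c * (1 - z) ^ k) \<partial>U01)
     = (\<integral>\<^sup>+z. indicator {L<..} z * ennreal (c * (1 - z) ^ k) * indicator {0<..<1} z \<partial>lborel)"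
    by (rule nn_U01) measurable
  also have "\<dots> = (\<integral>\<^sup>+z. ennreal (c * (1 - z) ^ k) * indicator {L..1} z \<partial>lborel)"
  proof (rule nn_integral_cong_AE)
    show "AE z in lborel. indicator {L<..} z * ennreal (c * (1 - z) ^ k) * indicator {0<..<1} z
           = ennreal (c * (1 - z) ^ k) * indicator {L..1} z"
      using AE_lborel_singleton[of L] AE_lborel_singleton[of 1]
      by eventually_elim (use assms in \<open>auto simp: indicator_def\<close>)
  qed
  also have "\<dots> = ennreal ((- (c * (1 - 1) ^ Suc k / Suc k)) - (- (c * (1 - L) ^ Suc k / Suc k)))"
  proof (rule nn_integral_FTC_Icc)
    show "(\<lambda>x. c * (1 - x) ^ k) \<in> borel_measurable borel" by measurable
    fix x assume "x \<in> {L..1}"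
    show "((\<lambda>x. - (c * (1 - x) ^ Suc k / Suc k)) has_real_derivative c * (1 - x) ^ k) (at x)"
      by (rule derivative_eq_intros refl | simp)+
    show "0 \<le> c * (1 - x) ^ k" using \<open>x \<in> {L..1}\<close> assms by auto
  qed (use assms in auto)
  also have "\<dots> = ennreal (c * (1 - L) ^ Suc k / Suc k)" by simp
  finally show ?thesis .
qed

lemma U01_const:
  fixes c L :: real
  assumes "0 \<le> L" "L \<le> 1" "0 \<le> c"
  shows "(\<integral>\<^sup>+z. indicator {L<..} z * ennreal c \<partial>U01) = ennreal (c * (1 - L))"
  using U01_pow[OF assms, of 0] by simp

definition TT :: "(nat \<Rightarrow> real) \<Rightarrow> (nat \<Rightarrow> bool) \<Rightarrow> nat set \<Rightarrow> real \<Rightarrow> (nat \<Rightarrow> real) set" where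
  "TT y \<delta> J L = {u. \<forall>q\<in>J. L < u q \<and> (\<delta> q \<longrightarrow> u q \<le> 1) \<and> (\<forall>p\<in>J. \<delta> p \<and> y p < y q \<longrightarrow> u p < u q)}"

definition rk :: "(nat \<Rightarrow> real) \<Rightarrow> nat set \<Rightarrow> nat \<Rightarrow> nat" where
  "rk y J p = card {q\<in>J. y p \<le> y q}"

definition cc :: "(nat \<Rightarrow> real) \<Rightarrow> (nat \<Rightarrow> bool) \<Rightarrow> nat set \<Rightarrow> real" where
  "cc y \<delta> J = (\<Prod>p\<in>{p\<in>J. \<delta> p}. 1 / real (rk y J p))"

lemma TT_meas[measurable]:
  assumes "finite J"
  shows "TT y \<delta> J L \<inter> space (PiM J (\<lambda>_. U01)) \<in> sets (PiM J (\<lambda>_. U01))"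
proof -
  have "TT y \<delta> J L \<inter> space (PiM J (\<lambda>_. U01)) = {u \<in> space (PiM J (\<lambda>_. U01)).
     \<forall>q\<in>J. L < u q \<and> (\<delta> q \<longrightarrow> u q \<le> 1) \<and> (\<forall>p\<in>J. \<delta> p \<and> y p < y q \<longrightarrow> u p < u q)}"
    by (auto simp: TT_def)
  also have "\<dots> \<in> sets (PiM J (\<lambda>_. U01))"
    using assms by measurable
  finally show ?thesis .
qed

lemma cc_nonneg: "0 \<le> cc y \<delta> J"
  unfolding cc_def by (intro prod_nonneg) auto

lemma TT_step:
  assumes "f \<notin> J'" "\<And>q. q \<in> J' \<Longrightarrow> y f < y q"
  shows "x(f := z) \<in> TT y \<delta> (insert f J') L \<longleftrightarrow>
         L < z \<and> (\<delta> f \<longrightarrow> z \<le> 1) \<and> x \<in> TT y \<delta> J' (if \<delta> f then z else L)"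
proof -
  have ne: "q \<in> J' \<Longrightarrow> q \<noteq> f" for q using assms(1) by auto
  have nl: "q \<in> J' \<Longrightarrow> \<not> y q < y f" for q using assms(2) by force
  have fx: "q \<in> J' \<Longrightarrow> (x(f := z)) q = x q" for q using ne by simp
  have key: "x(f := z) \<in> TT y \<delta> (insert f J') L \<longleftrightarrow>
     (L < z \<and> (\<delta> f \<longrightarrow> z \<le> 1) \<and> (\<forall>q\<in>J'. \<delta> f \<longrightarrow> z < x q)) \<and> x \<in> TT y \<delta> J' L"
    unfolding TT_def using assms(2) nl by (auto simp: fx)
  show ?thesis
    unfolding key by (auto simp: TT_def)
qed

lemma core:
  assumes "finite J" "inj_on y J" "0 \<le> L" "L \<le> 1"
  shows "emeasure (PiM J (\<lambda>_. U01)) (TT y \<delta> J L \<inter> space (PiM J (\<lambda>_. U01)))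
         = ennreal (cc y \<delta> J * (1 - L) ^ card J)"
  using assms
proof (induction "card J" arbitrary: J L)
  case 0
  then have "J = {}" by auto
  then show ?case by (simp add: PiM_empty TT_def cc_def)
next
  case (Suc k J L)
  note fin = \<open>finite J\<close>
  have "J \<noteq> {}" using Suc.hyps(2) by auto
  obtain f where fJ: "f \<in> J" and fmin: "y f = Min (y ` J)"
  proof -
    have "Min (y ` J) \<in> y ` J" using fin \<open>J \<noteq> {}\<close> by (intro Min_in) auto
    then show ?thesis using that by auto
  qed
  define J' where "J' = J - {f}"
  have JJ: "J = insert f J'" and fJ': "f \<notin> J'" using fJ by (auto simp: J'_def)
  have finJ': "finite J'" using fin by (auto simp: J'_def)
  have cardJ': "card J' = k" using Suc.hyps(2) fJ fin by (simp add: J'_def)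
  have injJ': "inj_on y J'" using Suc.prems(2) by (auto simp: J'_def intro: inj_on_subset)
  have less: "y f < y q" if "q \<in> J'" for q
  proof -
    have "y f \<le> y q" using fmin that fin by (auto simp: J'_def)
    moreover have "y f \<noteq> y q" using Suc.prems(2) that fJ by (auto simp: J'_def inj_on_def)
    ultimately show ?thesis by auto
  qed
  define g where "g z = (if \<delta> f then z else L)" for z
  let ?M = "\<lambda>A. PiM A (\<lambda>_::nat. U01)"
  have "emeasure (?M J) (TT y \<delta> J L \<inter> space (?M J))
     = (\<integral>\<^sup>+x. indicator (TT y \<delta> J L \<inter> space (?M J)) x \<partial>?M J)"
    using fin by (subst nn_integral_indicator) auto
  also have "\<dots> = (\<integral>\<^sup>+z. \<integral>\<^sup>+x. indicator (TT y \<delta> J L \<inter> space (?M J)) (x(f := z)) \<partial>?M J' \<partial>U01)"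
    unfolding JJ using finJ' fJ' by (intro U01P.product_nn_integral_insert_rev) (auto simp flip: JJ intro!: borel_measurable_indicator TT_meas fin)
  also have "\<dots> = (\<integral>\<^sup>+z. indicator {z. L < z \<and> (\<delta> f \<longrightarrow> z \<le> 1)} z *
        (\<integral>\<^sup>+x. indicator (TT y \<delta> J' (g z) \<inter> space (?M J')) x \<partial>?M J') \<partial>U01)"
  proof (rule nn_integral_cong)
    fix z :: real
    have "(\<integral>\<^sup>+x. indicator (TT y \<delta> J L \<inter> space (?M J)) (x(f := z)) \<partial>?M J')
       = (\<integral>\<^sup>+x. indicator {z. L < z \<and> (\<delta> f \<longrightarrow> z \<le> 1)} z *
              indicator (TT y \<delta> J' (g z) \<inter> space (?M J')) x \<partial>?M J')"
      apply (rule nn_integral_cong)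
      using TT_step[where f=f and J'=J' and y=y and z=z and \<delta>=\<delta> and L=L, OF fJ' less] unfolding JJ g_def
      by (auto simp: indicator_def space_PiM PiE_def extensional_def)
    also have "\<dots> = indicator {z. L < z \<and> (\<delta> f \<longrightarrow> z \<le> 1)} z *
        (\<integral>\<^sup>+x. indicator (TT y \<delta> J' (g z) \<inter> space (?M J')) x \<partial>?M J')"
      using finJ' by (subst nn_integral_cmult) auto
    finally show "(\<integral>\<^sup>+x. indicator (TT y \<delta> J L \<inter> space (?M J)) (x(f := z)) \<partial>?M J')
       = indicator {z. L < z \<and> (\<delta> f \<longrightarrow> z \<le> 1)} z *
        (\<integral>\<^sup>+x. indicator (TT y \<delta> J' (g z) \<inter> space (?M J')) x \<partial>?M J')" .
  qed
  also have "\<dots> = (\<integral>\<^sup>+z. indicator {L<..} z * ennreal (cc y \<delta> J' * (1 - g z) ^ k) \<partial>U01)"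
  proof (rule nn_integral_cong_AE)
    show "AE z in U01. indicator {z. L < z \<and> (\<delta> f \<longrightarrow> z \<le> 1)} z *
        (\<integral>\<^sup>+x. indicator (TT y \<delta> J' (g z) \<inter> space (?M J')) x \<partial>?M J')
        = indicator {L<..} z * ennreal (cc y \<delta> J' * (1 - g z) ^ k)"
      using AE_U01
    proof eventually_elim
      case (elim z)
      show ?case
      proof (cases "L < z")
        case True
        have "0 \<le> g z" "g z \<le> 1" using True elim Suc.prems by (auto simp: g_def)
        then have "(\<integral>\<^sup>+x. indicator (TT y \<delta> J' (g z) \<inter> space (?M J')) x \<partial>?M J')
            = ennreal (cc y \<delta> J' * (1 - g z) ^ k)"
          using Suc.hyps(1)[OF cardJ'[symmetric] finJ' injJ'] finJ' cardJ'
          by (subst nn_integral_indicator) auto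
        then show ?thesis using True elim by (auto simp: indicator_def)
      qed (auto simp: indicator_def)
    qed
  qed
  also have "\<dots> = ennreal (cc y \<delta> J * (1 - L) ^ card J)"
  proof (cases "\<delta> f")
    case True
    have rkf: "rk y J f = Suc k"
    proof -
      have "{q\<in>J. y f \<le> y q} = J" using fmin fin by auto
      then show ?thesis using Suc.hyps(2) by (simp add: rk_def)
    qed
    have rkp: "rk y J p = rk y J' p" if "p \<in> J'" for p
    proof -
      have "{q\<in>J. y p \<le> y q} = {q\<in>J'. y p \<le> y q}" using less[OF that] JJ by auto
      then show ?thesis by (simp add: rk_def)
    qed
    have "{p\<in>J. \<delta> p} = insert f {p\<in>J'. \<delta> p}" using True JJ by auto
    then have "cc y \<delta> J = 1 / real (Suc k) * cc y \<delta> J'"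
      unfolding cc_def using finJ' fJ' rkf rkp by (simp add: prod.insert)
    moreover have "(\<integral>\<^sup>+z. indicator {L<..} z * ennreal (cc y \<delta> J' * (1 - g z) ^ k) \<partial>U01)
        = ennreal (cc y \<delta> J' * (1 - L) ^ Suc k / Suc k)"
      using U01_pow[OF Suc.prems(3,4) cc_nonneg, of y \<delta> J' k] True by (simp add: g_def)
    ultimately show ?thesis using Suc.hyps(2) by simp
  next
    case False
    have rkp: "rk y J p = rk y J' p" if "p \<in> J'" for p
    proof -
      have "{q\<in>J. y p \<le> y q} = {q\<in>J'. y p \<le> y q}" using less[OF that] JJ by auto
      then show ?thesis by (simp add: rk_def)
    qed
    have "{p\<in>J. \<delta> p} = {p\<in>J'. \<delta> p}" using False JJ by auto
    then have "cc y \<delta> J = cc y \<delta> J'"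
      unfolding cc_def using rkp by (auto intro!: prod.cong)
    moreover have "(\<integral>\<^sup>+z. indicator {L<..} z * ennreal (cc y \<delta> J' * (1 - g z) ^ k) \<partial>U01)
        = ennreal (cc y \<delta> J' * (1 - L) ^ k * (1 - L))"
      using U01_const[OF Suc.prems(3,4), of "cc y \<delta> J' * (1 - L) ^ k"] False Suc.prems
      by (simp add: g_def cc_nonneg)
    ultimately show ?thesis using Suc.hyps(2)[symmetric] by (simp add: mult_ac)
  qed
  finally show ?case .
qed



lemma df_bounds:
  assumes "is_dist_fun_nonneg F"
  shows "0 \<le> F x" "F x \<le> 1"
proof -
  have mono: "mono F" and lim: "(F \<longlongrightarrow> 1) at_top" and neg: "\<forall>x<0. F x = 0"
    using assms by (auto simp: is_dist_fun_nonneg_def)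
  show "0 \<le> F x"
  proof (cases "x < 0")
    case False
    then have "F (-1) \<le> F x" using mono by (auto simp: mono_def)
    then show ?thesis using neg by auto
  qed (use neg in auto)
  show "F x \<le> 1"
  proof (rule tendsto_lowerbound[OF lim])
    show "\<forall>\<^sub>F z in at_top. F x \<le> F z"
      using eventually_ge_at_top[of x] by eventually_elim (use mono in \<open>auto simp: mono_def\<close>)
  qed simp
qed

context
  fixes n :: nat and y :: "nat \<Rightarrow> real" and \<delta> :: "nat \<Rightarrow> bool"
  assumes inj: "inj_on y {..<n}" and nonneg: "\<forall>i<n. 0 \<le> y i"
begin

lemma QF_TT:
  assumes "F \<in> QF n y \<delta> u"
  shows "u \<in> TT y \<delta> {..<n} 0"
proof -
  have df: "is_dist_fun_nonneg F" and fail: "\<And>i. i<n \<Longrightarrow> \<delta> i \<Longrightarrow> F (y i) \<ge> u i \<and> (\<forall>\<epsilon>>0. F (y i - \<epsilon>) < u i)"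
    and cens: "\<And>j. j<n \<Longrightarrow> \<not> \<delta> j \<Longrightarrow> F (y j) < u j"
    using assms by (auto simp: QF_def)
  have mono: "mono F" using df by (auto simp: is_dist_fun_nonneg_def)
  note b = df_bounds[OF df]
  show ?thesis unfolding TT_def
  proof (intro CollectI ballI conjI impI)
    fix q assume q: "q \<in> {..<n}"
    show "0 < u q"
    proof (cases "\<delta> q")
      case True
      then have "F (y q - 1) < u q" using fail[of q] q by auto
      then show ?thesis using b(1)[of "y q - 1"] by linarith
    next
      case False
      then show ?thesis using cens[of q] q b(1)[of "y q"] by auto
    qed
    show "u q \<le> 1" if "\<delta> q" using fail[of q] q that b(2)[of "y q"] by auto
    fix p assume p: "p \<in> {..<n}" and pq: "\<delta> p \<and> y p < y q"
    have up: "u p \<le> F (y p)" using fail[of p] p pq by auto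
    show "u p < u q"
    proof (cases "\<delta> q")
      case True
      have e: "\<forall>\<epsilon>>0. F (y q - \<epsilon>) < u q" using fail[of q] q True by auto
      have "F (y q - (y q - y p)) < u q" using spec[OF e, of "y q - y p"] pq by simp
      then show ?thesis using up by simp
    next
      case False
      have "F (y p) \<le> F (y q)" using mono pq by (auto simp: mono_def)
      then show ?thesis using cens[of q] q False up by auto
    qed
  qed
qed

lemma QF_bounds:
  assumes "F \<in> QF n y \<delta> u" "m < n" "\<delta> m"
  shows "u m \<le> F (y m)" "F (y m) \<le> 1" "\<And>q. q < n \<Longrightarrow> y m < y q \<Longrightarrow> F (y m) < u q"
proof -
  have df: "is_dist_fun_nonneg F" and fail: "\<And>i. i<n \<Longrightarrow> \<delta> i \<Longrightarrow> F (y i) \<ge> u i \<and> (\<forall>\<epsilon>>0. F (y i - \<epsilon>) < u i)"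
    and cens: "\<And>j. j<n \<Longrightarrow> \<not> \<delta> j \<Longrightarrow> F (y j) < u j"
    using assms by (auto simp: QF_def)
  have mono: "mono F" using df by (auto simp: is_dist_fun_nonneg_def)
  show "u m \<le> F (y m)" using fail assms by auto
  show "F (y m) \<le> 1" using df_bounds[OF df] by auto
  fix q assume q: "q < n" "y m < y q"
  show "F (y m) < u q"
  proof (cases "\<delta> q")
    case True
    have e: "\<forall>\<epsilon>>0. F (y q - \<epsilon>) < u q" using fail[of q] q True by auto
    show ?thesis using spec[OF e, of "y q - y m"] q by simp
  next
    case False
    have "F (y m) \<le> F (y q)" using mono q by (auto simp: mono_def)
    then show ?thesis using cens[of q] q False by auto
  qed
qed

lemma QF_construct:
  assumes u: "u \<in> TT y \<delta> {..<n} 0" and m: "m < n" "\<delta> m"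
    and a: "u m \<le> a" "a \<le> 1" "\<And>q. q < n \<Longrightarrow> y m < y q \<Longrightarrow> a < u q"
  shows "\<exists>F\<in>QF n y \<delta> u. F (y m) = a"
proof -
  define I where "I = {..<n}"
  define B where "B = Max (insert 0 (y ` I)) + 1"
  define v where "v r = (if r = m then a else u r)" for r
  define S where "S x = {r\<in>I. \<delta> r \<and> y r \<le> x}" for x
  define F where "F x = (if B \<le> x then 1 else Max (insert 0 (v ` S x)))" for x
  have finS: "finite (v ` S x)" for x by (auto simp: S_def I_def)
  have uI: "\<And>q. q \<in> I \<Longrightarrow> 0 < u q \<and> (\<delta> q \<longrightarrow> u q \<le> 1) \<and> (\<forall>p\<in>I. \<delta> p \<and> y p < y q \<longrightarrow> u p < u q)"
    using u by (auto simp: TT_def I_def)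
  have yB: "y q < B" if "q \<in> I" for q
  proof -
    have "y q \<le> Max (insert 0 (y ` I))" using that by (intro Max_ge) (auto simp: I_def)
    then show ?thesis by (simp add: B_def)
  qed
  have B0: "0 < B"
  proof -
    have "0 \<le> Max (insert 0 (y ` I))" by (intro Max_ge) (auto simp: I_def)
    then show ?thesis by (simp add: B_def)
  qed
  have v01: "0 \<le> v r \<and> v r \<le> 1" if "r \<in> I" "\<delta> r" for r
    using uI[of r] uI[of m] that a m by (auto simp: v_def I_def)
  have vless: "v r < u q" if "r \<in> I" "\<delta> r" "q \<in> I" "y r < y q" for r q
    using uI[of q] that a(3)[of q] by (auto simp: v_def I_def)
  have Fle1: "F x \<le> 1" for x
    unfolding F_def using finS[of x] v01 by (auto simp: S_def)
  have Fge0: "0 \<le> F x" for x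
    unfolding F_def using finS[of x] by (auto intro: Max_ge)
  have injI: "inj_on y I" using inj by (simp add: I_def)
  have mono: "mono F"
  proof (rule monoI)
    fix x x' :: real assume "x \<le> x'"
    show "F x \<le> F x'"
    proof (cases "B \<le> x'")
      case True then show ?thesis using Fle1[of x] by (simp add: F_def)
    next
      case False
      then have "\<not> B \<le> x" using \<open>x \<le> x'\<close> by auto
      moreover have "v ` S x \<subseteq> v ` S x'" using \<open>x \<le> x'\<close> by (auto simp: S_def)
      moreover have "Max (insert 0 (v ` S x)) \<le> Max (insert 0 (v ` S x'))"
        by (rule Max_mono) (use \<open>v ` S x \<subseteq> v ` S x'\<close> finS in auto)
      ultimately show ?thesis using False by (simp add: F_def)
    qed
  qed
  have rc: "continuous (at_right x) F" for x
  proof -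
    define D where "D = {d \<in> insert B (y ` I). x < d}"
    define b where "b = (if D = {} then x + 1 else Min D)"
    have finD: "finite D" by (auto simp: D_def I_def)
    have bx: "x < b" using finD by (auto simp: b_def D_def)
    have "\<forall>\<^sub>F z in at_right x. F z = F x"
      unfolding eventually_at_right_field
    proof (intro exI[of _ b] conjI allI impI bx)
      fix z assume z: "x < z" "z < b"
      have bD: "b \<le> d" if "d \<in> D" for d using that finD by (auto simp: b_def)
      have 1: "B \<le> z \<longleftrightarrow> B \<le> x"
      proof
        assume "B \<le> z"
        show "B \<le> x"
        proof (rule ccontr)
          assume "\<not> B \<le> x"
          then have "B \<in> D" by (auto simp: D_def)
          then show False using bD[of B] z \<open>B \<le> z\<close> by auto
        qed
      qed (use z in auto)
      have 2: "S z = S x"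
      proof -
        have "y r \<le> x" if "r \<in> I" "y r \<le> z" for r
        proof (rule ccontr)
          assume "\<not> y r \<le> x"
          then have "y r \<in> D" using that by (auto simp: D_def)
          then show False using bD[of "y r"] z that by auto
        qed
        then show ?thesis using z by (auto simp: S_def)
      qed
      show "F z = F x" using 1 2 by (simp add: F_def)
    qed
    then have "(F \<longlongrightarrow> F x) (at_right x)" by (rule tendsto_eventually)
    then show ?thesis by (simp add: continuous_within)
  qed
  have lim: "(F \<longlongrightarrow> 1) at_top"
    by (rule tendsto_eventually) (use eventually_ge_at_top[of B] in \<open>eventually_elim, simp add: F_def\<close>)
  have neg: "F x = 0" if "x < 0" for x
  proof -
    have "S x = {}" using that nonneg by (auto simp: S_def I_def)
    then show ?thesis using that B0 by (simp add: F_def)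
  qed
  have df: "is_dist_fun_nonneg F"
    unfolding is_dist_fun_nonneg_def using mono rc lim neg by auto
  have Fval: "F x = Max (insert 0 (v ` S x))" if "x < B" for x using that by (simp add: F_def)
  have Flt: "F x < c" if "x < B" "0 < c" "\<And>r. r \<in> S x \<Longrightarrow> v r < c" for x c
    using that finS[of x] by (simp add: Fval)
  have inQF: "F \<in> QF n y \<delta> u"
    unfolding QF_def
  proof (intro CollectI conjI allI impI df)
    fix i assume i: "i < n" "\<delta> i"
    then have iI: "i \<in> I" by (simp add: I_def)
    have "u i \<le> v i" using a by (auto simp: v_def)
    also have "v i \<le> Max (insert 0 (v ` S (y i)))"
      using finS[of "y i"] iI i by (intro Max_ge) (auto simp: S_def)
    finally show "u i \<le> F (y i)" using Fval[OF yB[OF iI]] by simp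
    fix \<epsilon> :: real assume "0 < \<epsilon>"
    show "F (y i - \<epsilon>) < u i"
    proof (rule Flt)
      show "y i - \<epsilon> < B" using yB[OF iI] \<open>0 < \<epsilon>\<close> by simp
      show "0 < u i" using uI[OF iI] by simp
      fix r assume "r \<in> S (y i - \<epsilon>)"
      then show "v r < u i" using vless[of r i] iI \<open>0 < \<epsilon>\<close> by (auto simp: S_def)
    qed
  next
    fix j assume j: "j < n" "\<not> \<delta> j"
    then have jI: "j \<in> I" by (simp add: I_def)
    show "F (y j) < u j"
    proof (rule Flt)
      show "y j < B" using yB[OF jI] .
      show "0 < u j" using uI[OF jI] by simp
      fix r assume r: "r \<in> S (y j)"
      then have "r \<noteq> j" using j by (auto simp: S_def)
      then have "y r \<noteq> y j" using injI r jI by (auto simp: S_def inj_on_def)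
      then show "v r < u j" using vless[of r j] r jI by (auto simp: S_def)
    qed
  qed
  have mI: "m \<in> I" using m by (simp add: I_def)
  have "F (y m) = a"
  proof -
    have "Max (insert 0 (v ` S (y m))) = a"
    proof (rule Max_eqI)
      show "finite (insert 0 (v ` S (y m)))" using finS by simp
      show "a \<in> insert 0 (v ` S (y m))" using mI m by (auto simp: S_def v_def intro!: image_eqI[of _ _ m])
      fix w assume "w \<in> insert 0 (v ` S (y m))"
      then consider "w = 0" | r where "r \<in> S (y m)" "w = v r" by auto
      then show "w \<le> a"
      proof cases
        case 1 then show ?thesis using a uI[OF mI] by simp
      next
        case 2
        show ?thesis
        proof (cases "r = m")
          case False
          then have "y r \<noteq> y m" using injI 2 mI by (auto simp: S_def inj_on_def)
          then have "y r < y m" using 2 by (auto simp: S_def)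
          then have "u r < u m" using uI[OF mI] 2 by (auto simp: S_def)
          then show ?thesis using 2 False a by (simp add: v_def)
        qed (use 2 in \<open>simp add: v_def\<close>)
      qed
    qed
    then show ?thesis using Fval[OF yB[OF mI]] by simp
  qed
  then show ?thesis using inQF by blast
qed

end



lemma phantom_TT:
  assumes "N \<notin> I"
  shows "x(N := z) \<in> TT (y(N := s)) (\<delta>(N := b)) (insert N I) L \<longleftrightarrow>
     x \<in> TT y \<delta> I L \<and> L < z \<and> (b \<longrightarrow> z \<le> 1) \<and> (\<forall>p\<in>I. \<delta> p \<and> y p < s \<longrightarrow> x p < z)
       \<and> (b \<longrightarrow> (\<forall>q\<in>I. s < y q \<longrightarrow> z < x q))"
proof -
  have ne: "q \<in> I \<Longrightarrow> q \<noteq> N" for q using assms by auto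
  show ?thesis
    unfolding TT_def using ne
    by (auto simp: Ball_def)
qed

lemma phantom_int:
  assumes fin: "finite I" "N \<notin> I"
  shows "emeasure (PiM (insert N I) (\<lambda>_. U01)) (TT y' \<delta>' (insert N I) 0 \<inter> space (PiM (insert N I) (\<lambda>_. U01)))
    = (\<integral>\<^sup>+x. \<integral>\<^sup>+z. indicator (TT y' \<delta>' (insert N I) 0) (x(N := z)) \<partial>U01 \<partial>PiM I (\<lambda>_. U01))"
proof -
  let ?M = "\<lambda>A. PiM A (\<lambda>_::nat. U01)"
  have "emeasure (?M (insert N I)) (TT y' \<delta>' (insert N I) 0 \<inter> space (?M (insert N I)))
     = (\<integral>\<^sup>+x. indicator (TT y' \<delta>' (insert N I) 0 \<inter> space (?M (insert N I))) x \<partial>?M (insert N I))"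
    using fin by (subst nn_integral_indicator) auto
  also have "\<dots> = (\<integral>\<^sup>+x. \<integral>\<^sup>+z. indicator (TT y' \<delta>' (insert N I) 0 \<inter> space (?M (insert N I))) (x(N := z)) \<partial>U01 \<partial>?M I)"
    using fin by (intro U01P.product_nn_integral_insert) (auto intro!: borel_measurable_indicator TT_meas)
  also have "\<dots> = (\<integral>\<^sup>+x. \<integral>\<^sup>+z. indicator (TT y' \<delta>' (insert N I) 0) (x(N := z)) \<partial>U01 \<partial>?M I)"
    by (intro nn_integral_cong) (auto simp: indicator_def space_PiM PiE_def extensional_def)
  finally show ?thesis .
qed

context
  fixes n :: nat and y :: "nat \<Rightarrow> real" and \<delta> :: "nat \<Rightarrow> bool" and m :: nat
  assumes inj: "inj_on y {..<n}" and nonneg: "\<forall>i<n. 0 \<le> y i" and m: "m < n" "\<delta> m"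
begin

definition Ks where "Ks = {q\<in>{..<n}. y m < y q}"
definition tp where "tp = (if Ks = {} then y m + 1 else (y m + Min (y ` Ks)) / 2)"
definition mK :: "(nat \<Rightarrow> real) \<Rightarrow> real" where "mK x = Min (insert 1 (x ` Ks))"

lemma finKs: "finite Ks" by (simp add: Ks_def)

lemma Ks_mem: "q \<in> Ks \<longleftrightarrow> q < n \<and> y m < y q" by (simp add: Ks_def)

lemma tp_props:
  assumes "q < n"
  shows "y q \<noteq> tp" "y q < tp \<longleftrightarrow> y q \<le> y m" "tp < y q \<longleftrightarrow> y m < y q"
proof -
  have "y m < tp \<and> (\<forall>q\<in>Ks. tp < y q)"
  proof (cases "Ks = {}")
    case False
    have "Min (y ` Ks) \<in> y ` Ks" using False finKs by (intro Min_in) auto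
    then have "y m < Min (y ` Ks)" by (auto simp: Ks_def)
    moreover have "\<forall>q\<in>Ks. Min (y ` Ks) \<le> y q" using finKs by auto
    ultimately show ?thesis using False by (auto simp: tp_def)
  qed (auto simp: tp_def)
  then have A: "y m < tp" and B: "\<And>q. q \<in> Ks \<Longrightarrow> tp < y q" by auto
  have C: "y q \<le> y m" if "\<not> q \<in> Ks" using that assms by (auto simp: Ks_def)
  show "y q \<noteq> tp" using A B[of q] C assms by (cases "q \<in> Ks") (auto simp: Ks_def)
  show "y q < tp \<longleftrightarrow> y q \<le> y m" using A B[of q] C assms by (cases "q \<in> Ks") (auto simp: Ks_def)
  show "tp < y q \<longleftrightarrow> y m < y q" using A B[of q] C assms by (cases "q \<in> Ks") (auto simp: Ks_def)
qed

lemma inj': "inj_on (y(n := tp)) (insert n {..<n})"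
proof -
  have "\<forall>q<n. y q \<noteq> tp" using tp_props(1) by blast
  then show ?thesis using inj unfolding inj_on_def by (metis fun_upd_other fun_upd_same insert_iff lessThan_iff)
qed

lemma TT_facts:
  assumes "x \<in> TT y \<delta> {..<n} 0"
  shows "0 < x m" "x m \<le> 1" "\<And>p. p < n \<Longrightarrow> \<delta> p \<Longrightarrow> y p < tp \<Longrightarrow> x p \<le> x m"
    "\<And>q. q \<in> Ks \<Longrightarrow> x m < x q" "x m \<le> mK x" "mK x \<le> 1"
proof -
  show "0 < x m" "x m \<le> 1" using assms m by (auto simp: TT_def)
  show "x p \<le> x m" if "p < n" "\<delta> p" "y p < tp" for p
  proof (cases "p = m")
    case False
    then have "y p \<noteq> y m" using inj that m by (auto simp: inj_on_def)
    then have "y p < y m" using tp_props(2)[OF that(1)] that by auto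
    then show ?thesis using assms that m by (force simp: TT_def)
  qed simp
  show xK: "x m < x q" if "q \<in> Ks" for q using assms that m by (auto simp: TT_def Ks_def)
  show "x m \<le> mK x" unfolding mK_def using finKs xK \<open>x m \<le> 1\<close>
    by (auto intro!: Min.boundedI less_imp_le)
  show "mK x \<le> 1" unfolding mK_def using finKs by (auto intro!: Min_le)
qed

lemma c1_int:
  "(\<integral>\<^sup>+x. indicator (TT y \<delta> {..<n} 0) x * ennreal (1 - x m) \<partial>PiM {..<n} (\<lambda>_. U01))
   = ennreal (cc (y(n := tp)) (\<delta>(n := False)) (insert n {..<n}))"
proof -
  let ?J = "insert n {..<n}"
  have "ennreal (cc (y(n := tp)) (\<delta>(n := False)) ?J)
      = emeasure (PiM ?J (\<lambda>_. U01)) (TT (y(n := tp)) (\<delta>(n := False)) ?J 0 \<inter> space (PiM ?J (\<lambda>_. U01)))"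
    using core[of ?J "y(n := tp)" 0 "\<delta>(n := False)"] inj' by simp
  also have "\<dots> = (\<integral>\<^sup>+x. \<integral>\<^sup>+z. indicator (TT (y(n := tp)) (\<delta>(n := False)) ?J 0) (x(n := z)) \<partial>U01 \<partial>PiM {..<n} (\<lambda>_. U01))"
    by (rule phantom_int) auto
  also have "\<dots> = (\<integral>\<^sup>+x. indicator (TT y \<delta> {..<n} 0) x * ennreal (1 - x m) \<partial>PiM {..<n} (\<lambda>_. U01))"
  proof (rule nn_integral_cong)
    fix x :: "nat \<Rightarrow> real"
    show "(\<integral>\<^sup>+z. indicator (TT (y(n := tp)) (\<delta>(n := False)) ?J 0) (x(n := z)) \<partial>U01)
        = indicator (TT y \<delta> {..<n} 0) x * ennreal (1 - x m)"
    proof (cases "x \<in> TT y \<delta> {..<n} 0")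
      case True
      note F = TT_facts[OF True]
      have "(\<integral>\<^sup>+z. indicator (TT (y(n := tp)) (\<delta>(n := False)) ?J 0) (x(n := z)) \<partial>U01)
          = (\<integral>\<^sup>+z. indicator {x m<..} z * ennreal 1 \<partial>U01)"
      proof (rule nn_integral_cong)
        fix z
        have "(0 < z \<and> (\<forall>p\<in>{..<n}. \<delta> p \<and> y p < tp \<longrightarrow> x p < z)) \<longleftrightarrow> x m < z"
          using F(1,3) m tp_props(2)[of m] by force
        then show "indicator (TT (y(n := tp)) (\<delta>(n := False)) ?J 0) (x(n := z)) = indicator {x m<..} z * ennreal 1"
          using phantom_TT[of n "{..<n}" x z y tp \<delta> False 0] True by (simp add: indicator_def)
      qed
      also have "\<dots> = ennreal (1 - x m)"
        using U01_const[of "x m" 1] F by simp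
      finally show ?thesis using True by simp
    next
      case False
      then show ?thesis using phantom_TT[of n "{..<n}" x _ y tp \<delta> False 0] by (simp add: indicator_def)
    qed
  qed
  finally show ?thesis by simp
qed

lemma c2_int:
  "(\<integral>\<^sup>+x. indicator (TT y \<delta> {..<n} 0) x * ennreal (mK x - x m) \<partial>PiM {..<n} (\<lambda>_. U01))
   = ennreal (cc (y(n := tp)) (\<delta>(n := True)) (insert n {..<n}))"
proof -
  let ?J = "insert n {..<n}"
  have "ennreal (cc (y(n := tp)) (\<delta>(n := True)) ?J)
      = emeasure (PiM ?J (\<lambda>_. U01)) (TT (y(n := tp)) (\<delta>(n := True)) ?J 0 \<inter> space (PiM ?J (\<lambda>_. U01)))"
    using core[of ?J "y(n := tp)" 0 "\<delta>(n := True)"] inj' by simp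
  also have "\<dots> = (\<integral>\<^sup>+x. \<integral>\<^sup>+z. indicator (TT (y(n := tp)) (\<delta>(n := True)) ?J 0) (x(n := z)) \<partial>U01 \<partial>PiM {..<n} (\<lambda>_. U01))"
    by (rule phantom_int) auto
  also have "\<dots> = (\<integral>\<^sup>+x. indicator (TT y \<delta> {..<n} 0) x * ennreal (mK x - x m) \<partial>PiM {..<n} (\<lambda>_. U01))"
  proof (rule nn_integral_cong)
    fix x :: "nat \<Rightarrow> real"
    show "(\<integral>\<^sup>+z. indicator (TT (y(n := tp)) (\<delta>(n := True)) ?J 0) (x(n := z)) \<partial>U01)
        = indicator (TT y \<delta> {..<n} 0) x * ennreal (mK x - x m)"
    proof (cases "x \<in> TT y \<delta> {..<n} 0")
      case True
      note F = TT_facts[OF True]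
      have "(\<integral>\<^sup>+z. indicator (TT (y(n := tp)) (\<delta>(n := True)) ?J 0) (x(n := z)) \<partial>U01)
          = (\<integral>\<^sup>+z. indicator {x m<..<mK x} z \<partial>U01)"
      proof (rule nn_integral_cong_AE)
        show "AE z in U01. indicator (TT (y(n := tp)) (\<delta>(n := True)) ?J 0) (x(n := z)) = indicator {x m<..<mK x} z"
          using AE_U01
        proof eventually_elim
          case (elim z)
          have 1: "(0 < z \<and> (\<forall>p\<in>{..<n}. \<delta> p \<and> y p < tp \<longrightarrow> x p < z)) \<longleftrightarrow> x m < z"
            using F(1,3) m tp_props(2)[of m] by force
          have 2: "(z \<le> 1 \<and> (\<forall>q\<in>{..<n}. tp < y q \<longrightarrow> z < x q)) \<longleftrightarrow> z < mK x"
            using elim finKs tp_props(3) by (auto simp: mK_def Ks_def)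
          show ?case
            using phantom_TT[of n "{..<n}" x z y tp \<delta> True 0] True 1 2 by (auto simp: indicator_def)
        qed
      qed
      also have "\<dots> = ennreal (mK x - x m)"
        using U01_interval[of "x m" "mK x"] F by simp
      finally show ?thesis using True by simp
    next
      case False
      then show ?thesis using phantom_TT[of n "{..<n}" x _ y tp \<delta> True 0] by (simp add: indicator_def)
    qed
  qed
  finally show ?thesis by simp
qed

end



lemma telescope:
  fixes S :: "nat set" and j :: nat
  assumes "finite S" "\<forall>a\<in>S. j \<le> a" "1 \<le> j"
  shows "(\<Prod>a\<in>S. real a / (real a + 1)) * ((real j - 1) / real j) \<le> (\<Prod>a\<in>S. (real a - 1) / real a)"
  using assms
proof (induction "card S" arbitrary: S j)
  case 0
  then have "S = {}" by auto
  then show ?case using 0 by simp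
next
  case (Suc k S j)
  have "S \<noteq> {}" using Suc.hyps(2) by auto
  define a0 where "a0 = Min S"
  have a0S: "a0 \<in> S" using Suc.prems(1) \<open>S \<noteq> {}\<close> by (simp add: a0_def)
  define S' where "S' = S - {a0}"
  have SS: "S = insert a0 S'" and a0S': "a0 \<notin> S'" using a0S by (auto simp: S'_def)
  have finS': "finite S'" using Suc.prems(1) by (simp add: S'_def)
  have cS': "k = card S'" using Suc.hyps(2) a0S Suc.prems(1) by (simp add: S'_def)
  have gt: "\<forall>a\<in>S'. Suc a0 \<le> a"
  proof
    fix a assume "a \<in> S'"
    then have "a0 \<le> a" "a \<noteq> a0" using Suc.prems(1) by (auto simp: S'_def a0_def)
    then show "Suc a0 \<le> a" by simp
  qed
  have ja0: "j \<le> a0" using Suc.prems(2) a0S by auto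
  have IH: "(\<Prod>a\<in>S'. real a / (real a + 1)) * ((real (Suc a0) - 1) / real (Suc a0))
      \<le> (\<Prod>a\<in>S'. (real a - 1) / real a)"
    using Suc.hyps(1)[OF cS' finS' gt] by simp
  have Q0: "0 \<le> (\<Prod>a\<in>S'. (real a - 1) / real a)"
    using gt by (intro prod_nonneg) auto
  have fr: "(real j - 1) / real j \<le> (real a0 - 1) / real a0"
    using ja0 Suc.prems(3) by (simp add: field_simps)
  have fr0: "0 \<le> (real j - 1) / real j" using Suc.prems(3) by simp
  have "(\<Prod>a\<in>S. real a / (real a + 1)) * ((real j - 1) / real j)
      = ((\<Prod>a\<in>S'. real a / (real a + 1)) * ((real (Suc a0) - 1) / real (Suc a0))) * ((real j - 1) / real j)"
    unfolding SS using finS' a0S' by (simp add: prod.insert mult_ac add.commute)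
  also have "\<dots> \<le> (\<Prod>a\<in>S'. (real a - 1) / real a) * ((real j - 1) / real j)"
    using IH fr0 by (rule mult_right_mono)
  also have "\<dots> \<le> (\<Prod>a\<in>S'. (real a - 1) / real a) * ((real a0 - 1) / real a0)"
    using fr Q0 by (rule mult_left_mono)
  also have "\<dots> = (\<Prod>a\<in>S. (real a - 1) / real a)"
    unfolding SS using finS' a0S' by (simp add: prod.insert mult_ac)
  finally show ?case .
qed

context
  fixes n :: nat and y :: "nat \<Rightarrow> real" and \<delta> :: "nat \<Rightarrow> bool" and m :: nat
  assumes inj: "inj_on y {..<n}" and nonneg: "\<forall>i<n. 0 \<le> y i" and m: "m < n" "\<delta> m"
begin

abbreviation "r p \<equiv> rk y {..<n} p"
definition "Rs = {p\<in>{..<n}. \<delta> p \<and> y p \<le> y m}"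

lemma r_pos: "p < n \<Longrightarrow> 1 \<le> r p"
proof -
  assume "p < n"
  then have "{q\<in>{..<n}. y p \<le> y q} \<noteq> {}" by auto
  then show "1 \<le> r p" by (simp add: rk_def Suc_le_eq card_gt_0_iff)
qed

lemma r_pos': "p < n \<Longrightarrow> 0 < r p"
  using r_pos[of p] by linarith

lemma r_mono: "p < n \<Longrightarrow> y p \<le> y m \<Longrightarrow> r m \<le> r p"
proof -
  assume a: "p < n" "y p \<le> y m"
  have "{q\<in>{..<n}. y m \<le> y q} \<subseteq> {q\<in>{..<n}. y p \<le> y q}" using a by auto
  then show ?thesis unfolding rk_def by (intro card_mono) auto
qed

lemma r_lt: "p < n \<Longrightarrow> q < n \<Longrightarrow> y p < y q \<Longrightarrow> r q < r p"
proof -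
  assume a: "p < n" "q < n" "y p < y q"
  have sub: "{x\<in>{..<n}. y q \<le> y x} \<subseteq> {x\<in>{..<n}. y p \<le> y x}"
  proof
    fix x assume "x \<in> {x\<in>{..<n}. y q \<le> y x}"
    then show "x \<in> {x\<in>{..<n}. y p \<le> y x}" using a(3) by simp
  qed
  have "p \<in> {x\<in>{..<n}. y p \<le> y x}" "p \<notin> {x\<in>{..<n}. y q \<le> y x}" using a by auto
  then have "{x\<in>{..<n}. y q \<le> y x} \<subset> {x\<in>{..<n}. y p \<le> y x}" using sub by blast
  then show "r q < r p" unfolding rk_def by (rule psubset_card_mono[rotated]) simp
qed

lemma r_inj: "inj_on r {..<n}"
proof (rule inj_onI)
  fix p q assume pq: "p \<in> {..<n}" "q \<in> {..<n}" "r p = r q"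
  show "p = q"
  proof (rule ccontr)
    assume "p \<noteq> q"
    then have "y p \<noteq> y q" using inj pq(1,2) by (auto simp: inj_on_def)
    then consider "y p < y q" | "y q < y p" by linarith
    then show False
    proof cases
      case 1 then show False using r_lt[of p q] pq by simp
    next
      case 2 then show False using r_lt[of q p] pq by simp
    qed
  qed
qed

lemma rk'_p: "p < n \<Longrightarrow> rk (y(n := tp n y m)) (insert n {..<n}) p = r p + (if y p \<le> y m then 1 else 0)"
proof -
  assume p: "p < n"
  have eq: "{q\<in>insert n {..<n}. (y(n := tp n y m)) p \<le> (y(n := tp n y m)) q}
      = (if y p \<le> y m then insert n {q\<in>{..<n}. y p \<le> y q} else {q\<in>{..<n}. y p \<le> y q})"
    using p tp_props(1,2)[where \<delta>=\<delta>, OF inj nonneg m, of p] by (auto simp: less_le)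
  show ?thesis unfolding rk_def eq by simp
qed

lemma rk'_n: "rk (y(n := tp n y m)) (insert n {..<n}) n = r m"
proof -
  have e: "tp n y m \<le> y q \<longleftrightarrow> y m < y q" if "q < n" for q
    using tp_props(1,3)[where \<delta>=\<delta>, OF inj nonneg m that] by linarith
  have "{q\<in>insert n {..<n}. (y(n := tp n y m)) n \<le> (y(n := tp n y m)) q} = insert n (Ks n y m)"
    using e by (auto simp: Ks_mem[where \<delta>=\<delta>, OF inj nonneg m])
  moreover have "{q\<in>{..<n}. y m \<le> y q} = insert m (Ks n y m)"
    using m inj by (auto simp: Ks_mem[where \<delta>=\<delta>, OF inj nonneg m] inj_on_def)
  moreover have "n \<notin> Ks n y m" "m \<notin> Ks n y m" by (auto simp: Ks_mem[where \<delta>=\<delta>, OF inj nonneg m])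
  ultimately show ?thesis unfolding rk_def using finKs[where \<delta>=\<delta>, OF inj nonneg m] by simp
qed

definition "Fs = {p\<in>{..<n}. \<delta> p}"

lemma c_eq: "cc y \<delta> {..<n} = (\<Prod>p\<in>Fs. 1 / real (r p))"
  by (simp add: cc_def Fs_def)

lemma c1_eq: "cc (y(n := tp n y m)) (\<delta>(n := False)) (insert n {..<n})
   = (\<Prod>p\<in>Fs. 1 / real (r p + (if y p \<le> y m then 1 else 0)))"
proof -
  have "{p\<in>insert n {..<n}. (\<delta>(n := False)) p} = Fs" by (auto simp: Fs_def)
  then show ?thesis unfolding cc_def using rk'_p by (auto simp: Fs_def intro!: prod.cong)
qed

lemma c2_eq: "cc (y(n := tp n y m)) (\<delta>(n := True)) (insert n {..<n})
   = cc (y(n := tp n y m)) (\<delta>(n := False)) (insert n {..<n}) * (1 / real (r m))"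
proof -
  have "{p\<in>insert n {..<n}. (\<delta>(n := True)) p} = insert n Fs" by (auto simp: Fs_def)
  moreover have "{p\<in>insert n {..<n}. (\<delta>(n := False)) p} = Fs" by (auto simp: Fs_def)
  moreover have "(\<Prod>p\<in>Fs. 1 / real (rk (y(n := tp n y m)) (insert n {..<n}) p))
      = (\<Prod>p\<in>Fs. 1 / real (rk (y(n := tp n y m)) (insert n {..<n}) p))" ..
  ultimately show ?thesis unfolding cc_def using rk'_n by (simp add: Fs_def prod.insert mult.commute)
qed

lemma c_pos: "0 < cc y \<delta> {..<n}"
  unfolding c_eq using r_pos' by (intro prod_pos) (auto simp: Fs_def)

lemma ratio: "cc (y(n := tp n y m)) (\<delta>(n := False)) (insert n {..<n}) / cc y \<delta> {..<n}
   = (\<Prod>p\<in>Rs. real (r p) / (real (r p) + 1))"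
proof -
  have "cc (y(n := tp n y m)) (\<delta>(n := False)) (insert n {..<n}) / cc y \<delta> {..<n}
     = (\<Prod>p\<in>Fs. (1 / real (r p + (if y p \<le> y m then 1 else 0))) / (1 / real (r p)))"
    unfolding c1_eq c_eq by (simp add: prod_dividef)
  also have "\<dots> = (\<Prod>p\<in>Fs. if y p \<le> y m then real (r p) / (real (r p) + 1) else 1)"
  proof (rule prod.cong)
    fix p assume "p \<in> Fs"
    then have "0 < r p" using r_pos' by (auto simp: Fs_def)
    then show "(1 / real (r p + (if y p \<le> y m then 1 else 0))) / (1 / real (r p))
        = (if y p \<le> y m then real (r p) / (real (r p) + 1) else 1)" by auto
  qed simp
  also have "\<dots> = (\<Prod>p\<in>{p\<in>Fs. y p \<le> y m}. real (r p) / (real (r p) + 1))"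
    by (rule prod.inter_filter[symmetric]) (simp add: Fs_def)
  also have "{p\<in>Fs. y p \<le> y m} = Rs" by (auto simp: Fs_def Rs_def)
  finally show ?thesis .
qed

lemma KM_eq: "KM n y \<delta> (y m) = (\<Prod>p\<in>Rs. 1 - 1 / real (r p))"
proof -
  have img: "{u \<in> y ` {..<n}. u \<le> y m} = y ` {p\<in>{..<n}. y p \<le> y m}" by auto
  have injS: "inj_on y {p\<in>{..<n}. y p \<le> y m}" using inj by (auto intro: inj_on_subset)
  have dN: "dNbar n y \<delta> (y p) = (if \<delta> p then 1 else 0)" if p: "p < n" for p
  proof -
    have "dNbar n y \<delta> (y p) = (\<Sum>i<n. (if y i \<le> y p \<and> \<delta> i then 1 else 0) - (if y i < y p \<and> \<delta> i then 1 else 0))"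
      by (simp add: dNbar_def Nbar_def Nbar_left_def sum_subtractf)
    also have "\<dots> = (\<Sum>i<n. if i = p then (if \<delta> p then 1 else 0) else 0)"
    proof (rule sum.cong)
      fix i assume "i \<in> {..<n}"
      then have "i \<noteq> p \<Longrightarrow> y i \<noteq> y p" using inj p by (auto simp: inj_on_def)
      then show "(if y i \<le> y p \<and> \<delta> i then 1 else 0) - (if y i < y p \<and> \<delta> i then 1 else 0)
          = (if i = p then (if \<delta> p then 1 else 0) else (0::real))" by (cases "i = p") auto
    qed simp
    also have "\<dots> = (if \<delta> p then 1 else 0)" using p by simp
    finally show ?thesis .
  qed
  have Kb: "Kbar n y (y p) = real (r p)" for p
  proof -
    have "{..<n} \<inter> {i. y p \<le> y i} = {q. q < n \<and> y p \<le> y q}" by auto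
    then show ?thesis by (simp add: Kbar_def rk_def sum.If_cases)
  qed
  have "KM n y \<delta> (y m) = (\<Prod>p\<in>{p\<in>{..<n}. y p \<le> y m}. 1 - dNbar n y \<delta> (y p) / Kbar n y (y p))"
    unfolding KM_def img by (subst prod.reindex[OF injS]) simp
  also have "\<dots> = (\<Prod>p\<in>{p\<in>{..<n}. y p \<le> y m}. if \<delta> p then 1 - 1 / real (r p) else 1)"
    using dN Kb by (intro prod.cong) auto
  also have "\<dots> = (\<Prod>p\<in>{p\<in>{p\<in>{..<n}. y p \<le> y m}. \<delta> p}. 1 - 1 / real (r p))"
    by (rule prod.inter_filter[symmetric]) simp
  also have "{p\<in>{p\<in>{..<n}. y p \<le> y m}. \<delta> p} = Rs" by (auto simp: Rs_def)
  finally show ?thesis .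
qed

lemma KM_nonneg: "0 \<le> KM n y \<delta> (y m)"
  unfolding KM_eq
proof (rule prod_nonneg)
  fix p assume "p \<in> Rs"
  then have "1 \<le> real (r p)" using r_pos by (auto simp: Rs_def)
  then show "0 \<le> 1 - 1 / real (r p)" by simp
qed

lemma upper_arith: "KM n y \<delta> (y m) \<le> (\<Prod>p\<in>Rs. real (r p) / (real (r p) + 1))"
  unfolding KM_eq
proof (rule prod_mono)
  fix p assume "p \<in> Rs"
  then have "1 \<le> r p" using r_pos by (auto simp: Rs_def)
  then show "0 \<le> 1 - 1 / real (r p) \<and> 1 - 1 / real (r p) \<le> real (r p) / (real (r p) + 1)"
    by (auto simp: field_simps)
qed

lemma lower_arith: "(\<Prod>p\<in>Rs. real (r p) / (real (r p) + 1)) * (1 - 1 / real (r m)) \<le> KM n y \<delta> (y m)"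
proof -
  have injR: "inj_on r Rs" using r_inj by (rule inj_on_subset) (auto simp: Rs_def)
  have finR: "finite Rs" by (simp add: Rs_def)
  have "(\<Prod>a\<in>r ` Rs. real a / (real a + 1)) * ((real (r m) - 1) / real (r m))
      \<le> (\<Prod>a\<in>r ` Rs. (real a - 1) / real a)"
    using r_mono r_pos[OF m(1)] finR by (intro telescope) (auto simp: Rs_def)
  moreover have "(\<Prod>a\<in>r ` Rs. real a / (real a + 1)) = (\<Prod>p\<in>Rs. real (r p) / (real (r p) + 1))"
    using injR by (simp add: prod.reindex)
  moreover have "(\<Prod>a\<in>r ` Rs. (real a - 1) / real a) = (\<Prod>p\<in>Rs. 1 - 1 / real (r p))"
    using injR r_pos' by (auto simp: prod.reindex Rs_def diff_divide_distrib intro!: prod.cong)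
  moreover have "(real (r m) - 1) / real (r m) = 1 - 1 / real (r m)"
    using r_pos[OF m(1)] by (simp add: diff_divide_distrib)
  ultimately show ?thesis unfolding KM_eq by simp
qed

end



lemma comp_meas: "i \<in> I \<Longrightarrow> (\<lambda>x. x i) \<in> borel_measurable (PiM I (\<lambda>_::nat. U01))"
proof -
  assume i: "i \<in> I"
  have e: "measurable (PiM I (\<lambda>_::nat. U01)) U01 = borel_measurable (PiM I (\<lambda>_. U01))"
    by (rule measurable_cong_sets) auto
  show ?thesis using measurable_component_singleton[OF i, of "\<lambda>_. U01"] unfolding e .
qed

context
  fixes n :: nat and y :: "nat \<Rightarrow> real" and \<delta> :: "nat \<Rightarrow> bool" and m :: nat
  assumes inj: "inj_on y {..<n}" and nonneg: "\<forall>i<n. 0 \<le> y i" and m: "m < n" "\<delta> m"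
begin

lemmas TTf = TT_facts[where \<delta>=\<delta>, OF inj nonneg m]
lemmas c1i = c1_int[where \<delta>=\<delta>, OF inj nonneg m]
lemmas c2i = c2_int[where \<delta>=\<delta>, OF inj nonneg m]
lemmas Ksm = Ks_mem[where \<delta>=\<delta>, OF inj nonneg m]
lemmas mKd = mK_def[where \<delta>=\<delta>, OF inj nonneg m]
lemmas finK = finKs[where \<delta>=\<delta>, OF inj nonneg m]

lemma QF_iff: "QF n y \<delta> u \<noteq> {} \<longleftrightarrow> u \<in> TT y \<delta> {..<n} 0"
proof
  assume "QF n y \<delta> u \<noteq> {}"
  then show "u \<in> TT y \<delta> {..<n} 0" using QF_TT[OF inj nonneg] by blast
next
  assume u: "u \<in> TT y \<delta> {..<n} 0"
  have "\<And>q. q < n \<Longrightarrow> y m < y q \<Longrightarrow> u m < u q" using TTf(4)[OF u] by (simp add: Ksm)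
  then have "\<exists>F\<in>QF n y \<delta> u. F (y m) = u m"
    using QF_construct[OF inj nonneg u m] TTf(2)[OF u] by auto
  then show "QF n y \<delta> u \<noteq> {}" by auto
qed

lemma SU_eq: "S_upper n y \<delta> u (y m) = (if u \<in> TT y \<delta> {..<n} 0 then 1 - u m else 1 - Inf {})"
proof (cases "u \<in> TT y \<delta> {..<n} 0")
  case True
  have lt: "\<And>q. q < n \<Longrightarrow> y m < y q \<Longrightarrow> u m < u q" using TTf(4)[OF True] by (simp add: Ksm)
  obtain F where "F \<in> QF n y \<delta> u" "F (y m) = u m"
    using QF_construct[OF inj nonneg True m _ TTf(2)[OF True] lt] by auto
  then have "Inf ((\<lambda>F. F (y m)) ` QF n y \<delta> u) = u m"
    by (intro cInf_eq_minimum) (auto intro: QF_bounds(1)[where \<delta>=\<delta>, OF inj nonneg _ m] image_eqI[where x=F])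
  then show ?thesis using True by (simp add: S_upper_def)
next
  case False
  then have "QF n y \<delta> u = {}" using QF_iff by blast
  then show ?thesis using False by (simp add: S_upper_def)
qed

lemma SL_bound:
  assumes u: "u \<in> TT y \<delta> {..<n} 0"
  shows "0 \<le> S_lower n y \<delta> u (y m)" "S_lower n y \<delta> u (y m) \<le> 1 - mK n y m u"
proof -
  let ?X = "(\<lambda>F. F (y m)) ` QF n y \<delta> u"
  have mem: "w \<in> ?X" if h: "u m \<le> w" "w \<le> 1" "\<And>q. q < n \<Longrightarrow> y m < y q \<Longrightarrow> w < u q" for w
  proof -
    obtain F where "F \<in> QF n y \<delta> u" "F (y m) = w"
      using QF_construct[OF inj nonneg u m h] by auto
    then show ?thesis by auto
  qed
  have lt: "\<And>q. q < n \<Longrightarrow> y m < y q \<Longrightarrow> u m < u q" using TTf(4)[OF u] by (simp add: Ksm)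
  have umX: "u m \<in> ?X" using mem[of "u m"] lt TTf(2)[OF u] by auto
  have le1: "\<And>x. x \<in> ?X \<Longrightarrow> x \<le> 1" using QF_bounds(2)[where \<delta>=\<delta>, OF inj nonneg _ m] by auto
  have bdd: "bdd_above ?X" using le1 by (auto simp: bdd_above_def)
  have "Sup ?X \<le> 1" using umX le1 by (intro cSup_least) auto
  then show "0 \<le> S_lower n y \<delta> u (y m)" by (simp add: S_lower_def)
  have mKle: "mK n y m u \<le> u q" if "q < n" "y m < y q" for q
    using that finK unfolding mKd by (intro Min_le) (auto simp: Ksm)
  have "mK n y m u \<le> Sup ?X"
  proof (cases "u m < mK n y m u")
    case True
    show ?thesis
    proof (rule dense_le_bounded[OF True])
      fix w assume w: "u m < w" "w < mK n y m u"
      have "w \<in> ?X" using w mKle TTf(6)[OF u] by (intro mem) force+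
      then show "w \<le> Sup ?X" using bdd by (rule cSup_upper)
    qed
  next
    case False
    then have "mK n y m u = u m" using TTf(5)[OF u] by simp
    then show ?thesis using umX bdd by (simp add: cSup_upper)
  qed
  then show "S_lower n y \<delta> u (y m) \<le> 1 - mK n y m u" by (simp add: S_lower_def)
qed

lemma mK_meas: "(\<lambda>u. mK n y m u) \<in> borel_measurable (PiM {..<n} (\<lambda>_. U01))"
proof (cases "Ks n y m = {}")
  case True
  have "mK n y m = (\<lambda>_. 1)" by (rule ext) (simp add: mKd True)
  then show ?thesis by simp
next
  case False
  have eq: "mK n y m u = min 1 (Min ((\<lambda>i. u i) ` Ks n y m))" for u
    unfolding mKd using False finK by (simp add: Min_insert)
  have sub: "Ks n y m \<subseteq> {..<n}" by (auto simp: Ksm)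
  have "(\<lambda>u. Min ((\<lambda>i. u i) ` Ks n y m)) \<in> borel_measurable (PiM {..<n} (\<lambda>_. U01))"
    using finK sub by (intro borel_measurable_Min) (auto intro!: comp_meas)
  then show ?thesis unfolding eq by measurable
qed

end



context
  fixes n :: nat and y :: "nat \<Rightarrow> real" and \<delta> :: "nat \<Rightarrow> bool" and m :: nat
  assumes inj: "inj_on y {..<n}" and nonneg: "\<forall>i<n. 0 \<le> y i" and m: "m < n" "\<delta> m"
begin

lemmas TTf' = TT_facts[where \<delta>=\<delta>, OF inj nonneg m]
lemmas c1i' = c1_int[where \<delta>=\<delta>, OF inj nonneg m]
lemmas c2i' = c2_int[where \<delta>=\<delta>, OF inj nonneg m]
lemmas QFi = QF_iff[where \<delta>=\<delta>, OF inj nonneg m]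
lemmas SUe = SU_eq[where \<delta>=\<delta>, OF inj nonneg m]
lemmas SLb = SL_bound[where \<delta>=\<delta>, OF inj nonneg m]
lemmas mKm = mK_meas[where \<delta>=\<delta>, OF inj nonneg m]

lemma main_m:
  shows "(\<integral>u. S_lower n y \<delta> u (y m) \<partial>fiducial n y \<delta>) \<le> KM n y \<delta> (y m)
       \<and> KM n y \<delta> (y m) \<le> (\<integral>u. S_upper n y \<delta> u (y m) \<partial>fiducial n y \<delta>)"
proof -
  define M where "M = PiM {..<n} (\<lambda>_::nat. U01)"
  define T where "T = TT y \<delta> {..<n} 0"
  define A where "A = {u \<in> space M. QF n y \<delta> u \<noteq> {}}"
  define c where "c = cc y \<delta> {..<n}"
  define c1 where "c1 = cc (y(n := tp n y m)) (\<delta>(n := False)) (insert n {..<n})"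
  define c2 where "c2 = cc (y(n := tp n y m)) (\<delta>(n := True)) (insert n {..<n})"
  have fid: "fiducial n y \<delta> = uniform_measure M A"
    by (simp add: fiducial_def unif_cube_def M_def A_def)
  have AT: "A = T \<inter> space M" using QFi by (auto simp: A_def T_def)
  have Asets[measurable]: "A \<in> sets M" unfolding AT M_def T_def by (rule TT_meas) simp
  have Tpred: "T \<inter> space M \<in> sets M" using Asets AT by simp
  have cpos: "0 < c" unfolding c_def by (rule c_pos[where \<delta>=\<delta>, OF inj nonneg m])
  have c1nn: "0 \<le> c1" unfolding c1_def by (rule cc_nonneg)
  have c2nn: "0 \<le> c2" unfolding c2_def by (rule cc_nonneg)
  have emA: "emeasure M A = ennreal c"
    using core[of "{..<n}" y 0 \<delta>] inj unfolding AT M_def T_def c_def by simp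
  have AE_A: "AE u in uniform_measure M A. u \<in> T"
    by (rule AE_uniform_measureI[OF Asets]) (auto simp: AT)
  have sets_fid: "sets (uniform_measure M A) = sets M" by simp
  have um_meas[measurable]: "(\<lambda>u. u m) \<in> borel_measurable M"
    unfolding M_def using m by (intro comp_meas) simp
  have mK_meas'[measurable]: "(\<lambda>u. mK n y m u) \<in> borel_measurable M"
    unfolding M_def by (rule mKm)
  have SU_fun: "(\<lambda>u. S_upper n y \<delta> u (y m)) = (\<lambda>u. if u \<in> T then 1 - u m else 1 - Inf {})"
    using SUe unfolding T_def by auto
  have SU_meas: "(\<lambda>u. S_upper n y \<delta> u (y m)) \<in> borel_measurable M"
    unfolding SU_fun by (rule measurable_If_set) (use Tpred in auto)
  have SUT: "\<And>u. u \<in> T \<Longrightarrow> S_upper n y \<delta> u (y m) = 1 - u m"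
    using SUe by (simp add: T_def)
  have umle: "\<And>u. u \<in> T \<Longrightarrow> u m \<le> 1"
    using TTf'(2) by (simp add: T_def)
  have mKfacts: "\<And>u. u \<in> T \<Longrightarrow> u m \<le> mK n y m u \<and> mK n y m u \<le> 1"
    using TTf'(5,6) by (simp add: T_def)
  have SLT: "\<And>u. u \<in> T \<Longrightarrow> 0 \<le> S_lower n y \<delta> u (y m) \<and> S_lower n y \<delta> u (y m) \<le> 1 - mK n y m u"
    using SLb by (simp add: T_def)
  have indT[measurable]: "(\<lambda>x. indicator T x :: ennreal) \<in> borel_measurable M"
  proof -
    have "(\<lambda>x. indicator T x :: ennreal) \<in> borel_measurable M \<longleftrightarrow> (\<lambda>x. indicator (T \<inter> space M) x :: ennreal) \<in> borel_measurable M"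
      by (rule measurable_cong) (simp add: indicator_def)
    moreover have "(\<lambda>x. indicator (T \<inter> space M) x :: ennreal) \<in> borel_measurable M"
      using Tpred by (rule borel_measurable_indicator)
    ultimately show ?thesis by simp
  qed
  have up: "(\<integral>u. S_upper n y \<delta> u (y m) \<partial>uniform_measure M A) = c1 / c"
  proof -
    have "(\<integral>u. S_upper n y \<delta> u (y m) \<partial>uniform_measure M A)
        = enn2real (\<integral>\<^sup>+u. ennreal (S_upper n y \<delta> u (y m)) \<partial>uniform_measure M A)"
    proof (rule integral_eq_nn_integral)
      show "(\<lambda>u. S_upper n y \<delta> u (y m)) \<in> borel_measurable (uniform_measure M A)"
        unfolding measurable_cong_sets[OF sets_fid refl] by (rule SU_meas)
      show "AE u in uniform_measure M A. 0 \<le> S_upper n y \<delta> u (y m)"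
        using AE_A by eventually_elim (simp add: SUT umle)
    qed
    also have "(\<integral>\<^sup>+u. ennreal (S_upper n y \<delta> u (y m)) \<partial>uniform_measure M A)
        = (\<integral>\<^sup>+u. ennreal (S_upper n y \<delta> u (y m)) * indicator A u \<partial>M) / emeasure M A"
      using SU_meas by (intro nn_integral_uniform_measure) auto
    also have "(\<integral>\<^sup>+u. ennreal (S_upper n y \<delta> u (y m)) * indicator A u \<partial>M)
        = (\<integral>\<^sup>+u. indicator T u * ennreal (1 - u m) \<partial>M)"
    proof (rule nn_integral_cong)
      fix u assume "u \<in> space M"
      then show "ennreal (S_upper n y \<delta> u (y m)) * indicator A u = indicator T u * ennreal (1 - u m)"
        by (cases "u \<in> T") (simp_all add: AT SUT)
    qed
    also have "\<dots> = ennreal c1" unfolding M_def T_def c1_def by (rule c1i')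
    finally show ?thesis using emA cpos c1nn by (simp add: divide_ennreal)
  qed
  have KMup: "KM n y \<delta> (y m) \<le> c1 / c"
    using upper_arith[where \<delta>=\<delta>, OF inj nonneg m] ratio[where \<delta>=\<delta>, OF inj nonneg m]
    unfolding c1_def c_def by simp
  have Lam: "\<exists>l. 0 \<le> l \<and> l + c2 = c1 \<and> (\<integral>\<^sup>+u. indicator T u * ennreal (1 - mK n y m u) \<partial>M) = ennreal l"
  proof -
    have "ennreal c1 = (\<integral>\<^sup>+u. indicator T u * ennreal (1 - u m) \<partial>M)"
      unfolding M_def T_def c1_def by (rule c1i'[symmetric])
    also have "\<dots> = (\<integral>\<^sup>+u. indicator T u * ennreal (1 - mK n y m u) + indicator T u * ennreal (mK n y m u - u m) \<partial>M)"
    proof (rule nn_integral_cong)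
      fix u
      show "indicator T u * ennreal (1 - u m) =
         indicator T u * ennreal (1 - mK n y m u) + indicator T u * ennreal (mK n y m u - u m)"
      proof (cases "u \<in> T")
        case True
        then have "u m \<le> mK n y m u" "mK n y m u \<le> 1" using mKfacts by auto
        then show ?thesis using True by (simp add: ennreal_plus[symmetric] del: ennreal_plus)
      qed simp
    qed
    also have "\<dots> = (\<integral>\<^sup>+u. indicator T u * ennreal (1 - mK n y m u) \<partial>M) + (\<integral>\<^sup>+u. indicator T u * ennreal (mK n y m u - u m) \<partial>M)"
    proof (rule nn_integral_add)
      have a: "(\<lambda>x. 1 - mK n y m x) \<in> borel_measurable M" using mK_meas' by (rule borel_measurable_diff[OF borel_measurable_const])
      have b: "(\<lambda>x. mK n y m x - x m) \<in> borel_measurable M" using mK_meas' um_meas by (rule borel_measurable_diff)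
      show "(\<lambda>x. indicator T x * ennreal (1 - mK n y m x)) \<in> borel_measurable M"
        by (rule borel_measurable_times_ennreal[OF indT measurable_compose[OF a measurable_ennreal]])
      show "(\<lambda>x. indicator T x * ennreal (mK n y m x - x m)) \<in> borel_measurable M"
        by (rule borel_measurable_times_ennreal[OF indT measurable_compose[OF b measurable_ennreal]])
    qed
    also have "(\<integral>\<^sup>+u. indicator T u * ennreal (mK n y m u - u m) \<partial>M) = ennreal c2"
      unfolding M_def T_def c2_def by (rule c2i')
    finally have eq: "ennreal c1 = (\<integral>\<^sup>+u. indicator T u * ennreal (1 - mK n y m u) \<partial>M) + ennreal c2" .
    have "(\<integral>\<^sup>+u. indicator T u * ennreal (1 - mK n y m u) \<partial>M) \<noteq> \<top>"
    proof
      assume "(\<integral>\<^sup>+u. indicator T u * ennreal (1 - mK n y m u) \<partial>M) = \<top>"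
      then have "ennreal c1 = \<top>" using eq by simp
      then show False by simp
    qed
    then obtain l where l: "0 \<le> l" "(\<integral>\<^sup>+u. indicator T u * ennreal (1 - mK n y m u) \<partial>M) = ennreal l"
      by (cases "(\<integral>\<^sup>+u. indicator T u * ennreal (1 - mK n y m u) \<partial>M)") auto
    then have "ennreal c1 = ennreal (l + c2)" using eq c2nn by (simp add: ennreal_plus)
    then have "l + c2 = c1" using l c1nn c2nn by (simp del: ennreal_plus)
    then show ?thesis using l by blast
  qed
  then obtain l where l: "0 \<le> l" "l + c2 = c1" "(\<integral>\<^sup>+u. indicator T u * ennreal (1 - mK n y m u) \<partial>M) = ennreal l"
    by blast
  have low: "(\<integral>u. S_lower n y \<delta> u (y m) \<partial>uniform_measure M A) \<le> l / c"
  proof (cases "integrable (uniform_measure M A) (\<lambda>u. S_lower n y \<delta> u (y m))")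
    case True
    have "(\<integral>u. S_lower n y \<delta> u (y m) \<partial>uniform_measure M A)
        = enn2real (\<integral>\<^sup>+u. ennreal (S_lower n y \<delta> u (y m)) \<partial>uniform_measure M A)"
    proof (rule integral_eq_nn_integral)
      show "(\<lambda>u. S_lower n y \<delta> u (y m)) \<in> borel_measurable (uniform_measure M A)"
        using True by (rule borel_measurable_integrable)
      show "AE u in uniform_measure M A. 0 \<le> S_lower n y \<delta> u (y m)"
        using AE_A by eventually_elim (simp add: SLT)
    qed
    also have "\<dots> \<le> enn2real (\<integral>\<^sup>+u. ennreal (1 - mK n y m u) \<partial>uniform_measure M A)"
    proof (rule enn2real_mono)
      show "(\<integral>\<^sup>+u. ennreal (S_lower n y \<delta> u (y m)) \<partial>uniform_measure M A)
          \<le> (\<integral>\<^sup>+u. ennreal (1 - mK n y m u) \<partial>uniform_measure M A)"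
      proof (rule nn_integral_mono_AE)
        show "AE u in uniform_measure M A. ennreal (S_lower n y \<delta> u (y m)) \<le> ennreal (1 - mK n y m u)"
          using AE_A by eventually_elim (simp add: SLT ennreal_leI)
      qed
      have "(\<integral>\<^sup>+u. ennreal (1 - mK n y m u) \<partial>uniform_measure M A)
          = (\<integral>\<^sup>+u. ennreal (1 - mK n y m u) * indicator A u \<partial>M) / emeasure M A"
        by (intro nn_integral_uniform_measure) auto
      also have "(\<integral>\<^sup>+u. ennreal (1 - mK n y m u) * indicator A u \<partial>M)
          = (\<integral>\<^sup>+u. indicator T u * ennreal (1 - mK n y m u) \<partial>M)"
        by (intro nn_integral_cong) (simp add: AT indicator_def)
      finally have eq2: "(\<integral>\<^sup>+u. ennreal (1 - mK n y m u) \<partial>uniform_measure M A) = ennreal (l / c)"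
        using l emA cpos by (simp add: divide_ennreal)
      then show "(\<integral>\<^sup>+u. ennreal (1 - mK n y m u) \<partial>uniform_measure M A) < \<top>" by simp
    qed
    also have "\<dots> = l / c"
    proof -
      have "(\<integral>\<^sup>+u. ennreal (1 - mK n y m u) \<partial>uniform_measure M A)
          = (\<integral>\<^sup>+u. ennreal (1 - mK n y m u) * indicator A u \<partial>M) / emeasure M A"
        by (intro nn_integral_uniform_measure) auto
      also have "(\<integral>\<^sup>+u. ennreal (1 - mK n y m u) * indicator A u \<partial>M)
          = (\<integral>\<^sup>+u. indicator T u * ennreal (1 - mK n y m u) \<partial>M)"
        by (intro nn_integral_cong) (simp add: AT indicator_def)
      finally show ?thesis using l emA cpos by (simp add: divide_ennreal)
    qed
    finally show ?thesis .
  next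
    case False
    then show ?thesis using l cpos by (simp add: not_integrable_integral_eq)
  qed
  have KMlow: "l / c \<le> KM n y \<delta> (y m)"
  proof -
    have "c2 = c1 * (1 / real (rk y {..<n} m))"
      unfolding c1_def c2_def by (rule c2_eq[where \<delta>=\<delta>, OF inj nonneg m])
    then have "l / c = (c1 / c) * (1 - 1 / real (rk y {..<n} m))"
      using l(2) by (simp add: field_simps)
    also have "\<dots> \<le> KM n y \<delta> (y m)"
      using lower_arith[where \<delta>=\<delta>, OF inj nonneg m] ratio[where \<delta>=\<delta>, OF inj nonneg m]
      unfolding c1_def c_def by simp
    finally show ?thesis .
  qed
  show ?thesis unfolding fid using up KMup low KMlow by auto
qed

end

theorem lemma2:
  fixes n :: nat and y :: "nat \<Rightarrow> real" and \<delta> :: "nat \<Rightarrow> bool" and t :: real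
  assumes no_ties: "inj_on y {..<n}"
    and nonneg: "\<forall>i<n. 0 \<le> y i"
    and failure: "\<exists>i<n. \<delta> i \<and> t = y i"
  shows "(\<integral>u. S_lower n y \<delta> u t \<partial>fiducial n y \<delta>) \<le> KM n y \<delta> t
       \<and> KM n y \<delta> t \<le> (\<integral>u. S_upper n y \<delta> u t \<partial>fiducial n y \<delta>)"
proof -
  obtain m where m: "m < n" "\<delta> m" "t = y m" using failure by blast
  show ?thesis using main_m[where \<delta>=\<delta>, OF no_ties nonneg m(1,2)] m(3) by simp
qed


end
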